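(* Let $d\ge 7$ be an integer, $\omega=\sqrt{d^2-8d+8}$, and let $\phi_n$ ($n\ge 0$) be the normalized eigenfunctions ($\|\phi_n\|=1$) of $A$ with eigenvalues $\lambda_n=-\frac{\gamma}{2}+n$. Then $$\Bigl\|\frac{\phi_n(y)}{y}\Bigr\|\le \frac{4n}{\omega}+1\qquad\text{for all } n\ge 0,$$ where $\|\cdot\|$ is the norm of $\mathcal H$ applied to the function $y\mapsto\phi_n(y)/y$.
   Context: Let $\gamma=\frac12(d-2-\omega)$, $\rho(y)=y^{d-1}e^{-y^2/4}$, $\mathcal H=L^2((0,\infty),\rho\,dy)$ with inner product $\langle f,g\rangle=\int_0^\infty fg\rho\,dy$ and norm $\|\cdot\|$. $\mathcal A\phi=-\frac1\rho(\rho\phi')'-\frac{d-1}{y^2}\phi$ on $C_0^\infty((0,\infty))$, and $A$ is its Friedrichs extension. The normalized eigenfunctions of $A$ are $\phi_n(y)=\mathcal N_n y^{-\gamma}L_n^{(\omega/2)}(y^2/4)$, where $L_n^{(a)}$ is the generalized Laguerre polynomial and $\mathcal N_n>0$ is a normalizing constant. *)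

theory Defs
  imports "HOL-Analysis.Analysis"
begin

definition laguerre :: "nat \<Rightarrow> real \<Rightarrow> real \<Rightarrow> real" where
  "laguerre n a x = (\<Sum>k\<le>n. (-1)^k * ((real n + a) gchoose (n - k)) * x^k / fact k)"

definition omega :: "nat \<Rightarrow> real" where
  "omega d = sqrt (real d ^ 2 - 8 * real d + 8)"

definition gam :: "nat \<Rightarrow> real" where
  "gam d = (real d - 2 - omega d) / 2"

definition weight :: "nat \<Rightarrow> real \<Rightarrow> real" where
  "weight d y = y powr (real d - 1) * exp (- (y^2) / 4)"

text \<open>Squared norm in H = L^2((0,oo), rho dy), as an extended nonnegative real.\<close>
definition Hnorm_sq :: "nat \<Rightarrow> (real \<Rightarrow> real) \<Rightarrow> ennreal" where
  "Hnorm_sq d f = (\<integral>\<^sup>+ y \<in> {0<..}. ennreal ((f y)^2 * weight d y) \<partial>lborel)"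

text \<open>Eigenfunction phi_n with normalizing constant N.\<close>
definition phi :: "nat \<Rightarrow> real \<Rightarrow> nat \<Rightarrow> real \<Rightarrow> real" where
  "phi d N n y = N * y powr (- gam d) * laguerre n (omega d / 2) (y^2 / 4)"

end

theory Submission
  imports Defs "HOL-Computational_Algebra.Formal_Power_Series"
begin


lemma Gamma_real_open:
  assumes "x > (0::real)"
  shows "((\<lambda>t. t powr (x - 1) / exp t) has_integral Gamma x) {0<..}"
proof -
  have "((\<lambda>t. t powr (x - 1) / exp t) has_integral Gamma x) {0..}"
    by (rule Gamma_integral_real) fact
  hence "((\<lambda>t. if t \<in> {0<..} then t powr (x - 1) / exp t else 0) has_integral Gamma x) {0..}"
    by (rule has_integral_spike [of "{0}", rotated 2]) auto
  also have "?this = ?thesis"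
    by (subst has_integral_restrict) auto
  finally show ?thesis .
qed

lemma moment:
  fixes s :: real
  assumes "s > -1"
  shows "((\<lambda>y. y powr s * exp (- (y^2) / 4)) has_integral 2 powr s * Gamma ((s+1)/2)) {0<..}"
proof -
  define x where "x = (s+1)/2"
  have x: "x > 0" using assms by (simp add: x_def)
  define f where "f = (\<lambda>t::real. t powr (x - 1) / exp t)"
  have G: "(f has_integral Gamma x) {0<..}" unfolding f_def by (rule Gamma_real_open[OF x])
  have ai: "f absolutely_integrable_on {0<..}"
    by (rule nonnegative_absolutely_integrable_1) (use G in \<open>auto simp: f_def\<close>)
  have img: "(\<lambda>y::real. y^2/4) ` {0<..} = {0<..}"
  proof
    show "(\<lambda>y::real. y^2/4) ` {0<..} \<subseteq> {0<..}" by auto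
    show "{0<..} \<subseteq> (\<lambda>y::real. y^2/4) ` {0<..}"
    proof
      fix t :: real assume "t \<in> {0<..}"
      hence "t = (2 * sqrt t)^2/4 \<and> 2 * sqrt t \<in> {0<..}" by (auto simp: power_mult_distrib)
      thus "t \<in> (\<lambda>y::real. y^2/4) ` {0<..}" by blast
    qed
  qed
  have der: "\<And>y. y \<in> {0<..} \<Longrightarrow> ((\<lambda>y::real. y^2/4) has_field_derivative (y/2)) (at y within {0<..})"
    by (auto intro!: derivative_eq_intros)
  have inj: "inj_on (\<lambda>y::real. y^2/4) {0<..}"
    by (auto simp: inj_on_def power2_eq_iff)
  have "(\<lambda>y. \<bar>y/2\<bar> * f (y^2/4)) absolutely_integrable_on {0<..} \<and>
           integral {0<..} (\<lambda>y. \<bar>y/2\<bar> * f (y^2/4)) = Gamma x"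
    using has_absolute_integral_change_of_variables_1'[OF _ der inj, of f "Gamma x"] ai G img
    by (auto simp: integral_unique)
  hence H: "((\<lambda>y. \<bar>y/2\<bar> * f (y^2/4)) has_integral Gamma x) {0<..}"
    using set_lebesgue_integral_eq_integral(1) has_integral_integral
    by (metis absolutely_integrable_on_def)
  have eq: "\<bar>y/2\<bar> * f (y^2/4) = 2 powr (-s) * (y powr s * exp (- (y^2) / 4))" if "y \<in> {0<..}" for y :: real
  proof -
    have y: "y > 0" using that by auto
    have "(y^2/4) powr (x-1) = (y/2) powr (s - 1)"
    proof -
      have "y^2/4 = (y/2) powr 2" using y by (simp add: powr_realpow power_divide)
      hence "(y^2/4) powr (x-1) = (y/2) powr (2*(x-1))" by (simp add: powr_powr)
      also have "2*(x-1) = s - 1" by (simp add: x_def)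
      finally show ?thesis .
    qed
    moreover have "y/2 * (y/2) powr (s-1) = (y/2) powr s"
      using y by (simp add: powr_diff)
    moreover have "(y/2) powr s = y powr s * 2 powr (-s)"
      using y by (simp add: powr_divide powr_minus field_simps)
    ultimately show ?thesis using y by (simp add: f_def exp_minus field_simps)
  qed
  have "((\<lambda>y. 2 powr (-s) * (y powr s * exp (- (y^2) / 4))) has_integral Gamma x) {0<..}"
    using has_integral_eq[OF _ H] eq by auto
  hence "((\<lambda>y. 2 powr s * (2 powr (-s) * (y powr s * exp (- (y^2) / 4)))) has_integral 2 powr s * Gamma x) {0<..}"
    by (rule has_integral_mult_right)
  moreover have "2 powr s * (2 powr (-s) * z) = z" for z :: real by (simp add: powr_minus)
  ultimately show ?thesis by (simp add: x_def)
qed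



definition lc :: "nat \<Rightarrow> real \<Rightarrow> nat \<Rightarrow> real" where
  "lc n a k = (-1)^k * ((real n + a) gchoose (n-k)) / fact k"

lemma ortho:
  fixes a :: real assumes a: "a > 0" and j: "1 \<le> j" "j \<le> n"
  shows "(\<Sum>k\<le>n. lc n a k * Gamma (a + real j + real k)) = 0"
proof -
  define b where "b = a + real j"
  have b: "b > 0" using a by (simp add: b_def)
  have nz: "b \<notin> \<int>\<^sub>\<le>\<^sub>0" using b by (auto elim!: nonpos_Ints_cases)
  have G0: "Gamma b \<noteq> 0" using nz by (simp add: Gamma_eq_zero_iff)
  have t: "lc n a k * Gamma (a + real j + real k) = Gamma b * (((-b) gchoose k) * ((real n + a) gchoose (n-k)))" for k
  proof -
    have "pochhammer b k = Gamma (b + real k) / Gamma b" using pochhammer_Gamma[OF nz] by simp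
    hence "Gamma (b + real k) = Gamma b * pochhammer b k" using G0 by (simp add: field_simps)
    moreover have gp: "(-b) gchoose k = (-1)^k * pochhammer b k / fact k"
      by (simp add: gbinomial_pochhammer)
    moreover have "a + real j + real k = b + real k" by (simp add: b_def)
    ultimately show ?thesis by (simp add: lc_def)
  qed
  have "(\<Sum>k\<le>n. lc n a k * Gamma (a + real j + real k)) =
        Gamma b * (\<Sum>k=0..n. ((-b) gchoose k) * ((real n + a) gchoose (n-k)))"
    by (simp add: t sum_distrib_left atMost_atLeast0)
  also have "(\<Sum>k=0..n. ((-b) gchoose k) * ((real n + a) gchoose (n-k))) = (-b + (real n + a)) gchoose n"
    by (rule gbinomial_Vandermonde)
  also have "-b + (real n + a) = real (n - j)" using j by (simp add: b_def of_nat_diff)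
  also have "real (n - j) gchoose n = real ((n - j) choose n)" by (simp add: binomial_gbinomial)
  also have "(n - j) choose n = 0" using j by (simp add: binomial_eq_0)
  finally show ?thesis by simp
qed

lemma Sid:
  fixes a :: real assumes a: "a > 0"
  shows "(\<Sum>j\<le>n. \<Sum>k\<le>n. lc n a j * lc n a k * Gamma (a + 1 + real j + real k))
       = a * (\<Sum>j\<le>n. \<Sum>k\<le>n. lc n a j * lc n a k * Gamma (a + real j + real k))"
proof -
  define T where "T = (\<Sum>j\<le>n. \<Sum>k\<le>n. lc n a j * lc n a k * real j * Gamma (a + real j + real k))"
  have T0: "T = 0"
  proof -
    have "T = (\<Sum>j\<le>n. lc n a j * real j * (\<Sum>k\<le>n. lc n a k * Gamma (a + real j + real k)))"
      unfolding T_def by (simp add: sum_distrib_left mult_ac)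
    also have "\<dots> = 0"
    proof (rule sum.neutral, rule ballI)
      fix j assume "j \<in> {..n}"
      thus "lc n a j * real j * (\<Sum>k\<le>n. lc n a k * Gamma (a + real j + real k)) = 0"
        using ortho[OF a, of j n] by (cases "j = 0") auto
    qed
    finally show ?thesis .
  qed
  have T': "(\<Sum>j\<le>n. \<Sum>k\<le>n. lc n a j * lc n a k * real k * Gamma (a + real j + real k)) = T"
    unfolding T_def by (subst sum.swap) (simp add: mult_ac add_ac)
  have g: "Gamma (a + 1 + real j + real k) = (a + real j + real k) * Gamma (a + real j + real k)" for j k
  proof -
    have "a + real j + real k \<notin> \<int>\<^sub>\<le>\<^sub>0" using a by (auto elim!: nonpos_Ints_cases)
    from Gamma_plus1[OF this] show ?thesis by (simp add: add_ac)
  qed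
  have "(\<Sum>j\<le>n. \<Sum>k\<le>n. lc n a j * lc n a k * Gamma (a + 1 + real j + real k))
      = a * (\<Sum>j\<le>n. \<Sum>k\<le>n. lc n a j * lc n a k * Gamma (a + real j + real k))
        + T + (\<Sum>j\<le>n. \<Sum>k\<le>n. lc n a j * lc n a k * real k * Gamma (a + real j + real k))"
    unfolding T_def g by (simp add: sum_distrib_left sum.distrib[symmetric] algebra_simps)
  thus ?thesis using T0 T' by simp
qed



lemma lag_sum: "laguerre n a x = (\<Sum>k\<le>n. lc n a k * x^k)"
  unfolding laguerre_def lc_def by (simp add: field_simps)

lemma sq_sum:
  fixes c :: "nat \<Rightarrow> real" and y :: real
  shows "(\<Sum>k\<le>n. c k * (y^2/4)^k)^2 = (\<Sum>j\<le>n. \<Sum>k\<le>n. c j * c k / 4^(j+k) * y^(2*(j+k)))"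
  by (simp add: power2_eq_square sum_product power_divide power_add power_mult field_simps)

lemma powr_split:
  fixes y e :: real and m :: nat assumes "y > 0"
  shows "y powr (e + 2 * real m) = y powr e * y^(2*m)"
  using assms by (simp add: powr_add flip: powr_realpow)

lemma weight_nonneg: "weight d y \<ge> 0"
  unfolding weight_def by simp

lemma Hnorm_from:
  assumes g: "(g has_integral V) {0<..}" and eq: "\<And>y. y > 0 \<Longrightarrow> (F y)^2 * weight d y = g y"
  shows "Hnorm_sq d F = ennreal V"
proof -
  have "Hnorm_sq d F = (\<integral>\<^sup>+ y. ennreal (indicator {0<..} y * g y) \<partial>lborel)"
    unfolding Hnorm_sq_def by (intro nn_integral_cong) (auto simp: eq split: split_indicator)
  also have "\<dots> = ennreal V"
  proof (rule nn_integral_has_integral_lebesgue[OF _ g])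
    fix y :: real assume "y \<in> {0<..}"
    hence "y > 0" by simp
    hence "g y = (F y)^2 * weight d y" using eq by simp
    also have "\<dots> \<ge> 0" by (intro mult_nonneg_nonneg zero_le_power2 weight_nonneg)
    finally show "0 \<le> g y" .
  qed
  finally show ?thesis .
qed

lemma integral_sum2:
  fixes a N :: real and e :: real and n :: nat
  assumes e: "e > -1"
  shows "((\<lambda>y. \<Sum>j\<le>n. \<Sum>k\<le>n. N^2 * lc n a j * lc n a k / 4^(j+k) * (y powr (e + 2 * real (j+k)) * exp (- (y^2) / 4)))
     has_integral (\<Sum>j\<le>n. \<Sum>k\<le>n. N^2 * lc n a j * lc n a k / 4^(j+k) * (2 powr (e + 2 * real (j+k)) * Gamma ((e + 2 * real (j+k) + 1)/2)))) {0<..}"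
proof (intro has_integral_sum ballI finite_atMost has_integral_mult_right moment)
  fix j k :: nat
  show "e + 2 * real (j+k) > -1" using e by simp
qed

theorem mainTheorem5:
  fixes d n :: nat and N :: real
  assumes "d \<ge> 7"
    and "N > 0"
    and "Hnorm_sq d (phi d N n) = 1"
  shows "Hnorm_sq d (\<lambda>y. phi d N n y / y) \<le> ennreal ((4 * real n / omega d + 1) ^ 2)"
proof -
  define w where "w = omega d"
  define a where "a = w / 2"
  have "real d ^ 2 - 8 * real d + 8 \<ge> 1"
  proof -
    have "(real d - 7) * (real d - 1) \<ge> 0" using assms(1) by simp
    thus ?thesis by (simp add: algebra_simps power2_eq_square)
  qed
  hence w1: "w \<ge> 1" unfolding w_def omega_def by (simp add: real_sqrt_ge_one)
  hence a: "a > 0" "a \<ge> 1/2" by (auto simp: a_def)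
  have gam: "gam d = (real d - 2 - 2*a)/2" by (simp add: gam_def a_def w_def)
  define c where "c = lc n a"
  define S1 where "S1 = (\<Sum>j\<le>n. \<Sum>k\<le>n. c j * c k * Gamma (a + 1 + real j + real k))"
  define S0 where "S0 = (\<Sum>j\<le>n. \<Sum>k\<le>n. c j * c k * Gamma (a + real j + real k))"
  have S: "S1 = a * S0" unfolding S1_def S0_def c_def by (rule Sid[OF a(1)])
  have Lag: "laguerre n (omega d / 2) x = (\<Sum>k\<le>n. c k * x^k)" for x
    by (simp add: lag_sum c_def a_def w_def)
  have expo: "(y powr (- gam d))^2 * y powr (real d - 1) = y powr (2*a+1)" if y: "y > 0" for y
  proof -
    have "(y powr (- gam d))^2 = y powr (- gam d + - gam d)"
      by (simp only: power2_eq_square powr_add)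
    hence "(y powr (- gam d))^2 * y powr (real d - 1) = y powr (- gam d + - gam d + (real d - 1))"
      by (simp only: powr_add)
    also have "- gam d + - gam d + (real d - 1) = 2*a+1" by (simp add: gam field_simps)
    finally show ?thesis .
  qed
  have base: "(phi d N n y)^2 * weight d y = N^2 * y powr (2*a+1) * exp (- (y^2) / 4) * (\<Sum>k\<le>n. c k * (y^2/4)^k)^2"
    if y: "y > 0" for y
  proof -
    have "(phi d N n y)^2 * weight d y = N^2 * ((y powr (- gam d))^2 * y powr (real d - 1)) * exp (- (y^2) / 4) * (\<Sum>k\<le>n. c k * (y^2/4)^k)^2"
      unfolding phi_def weight_def Lag by (simp add: power_mult_distrib mult_ac)
    thus ?thesis using expo[OF y] by simp
  qed
  have expand: "N^2 * y powr e * exp (- (y^2) / 4) * (\<Sum>k\<le>n. c k * (y^2/4)^k)^2 =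
     (\<Sum>j\<le>n. \<Sum>k\<le>n. N^2 * c j * c k / 4^(j+k) * (y powr (e + 2 * real (j+k)) * exp (- (y^2) / 4)))"
    if y: "y > 0" for y e
  proof -
    have "(\<Sum>j\<le>n. \<Sum>k\<le>n. N^2 * c j * c k / 4^(j+k) * (y powr (e + 2 * real (j+k)) * exp (- (y^2) / 4)))
       = (\<Sum>j\<le>n. \<Sum>k\<le>n. (N^2 * y powr e * exp (- (y^2) / 4)) * (c j * c k / 4^(j+k) * y^(2*(j+k))))"
      by (intro sum.cong refl) (simp only: powr_split[OF y] mult_ac times_divide_eq_right times_divide_eq_left)
    also have "\<dots> = (N^2 * y powr e * exp (- (y^2) / 4)) * (\<Sum>j\<le>n. \<Sum>k\<le>n. c j * c k / 4^(j+k) * y^(2*(j+k)))"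
      by (simp only: sum_distrib_left)
    finally show ?thesis by (simp only: sq_sum)
  qed
  have P1: "(phi d N n y)^2 * weight d y = (\<Sum>j\<le>n. \<Sum>k\<le>n. N^2 * c j * c k / 4^(j+k) * (y powr ((2*a+1) + 2 * real (j+k)) * exp (- (y^2) / 4)))"
    if y: "y > 0" for y
    using base[OF y] expand[OF y] by simp
  have P0: "(phi d N n y / y)^2 * weight d y = (\<Sum>j\<le>n. \<Sum>k\<le>n. N^2 * c j * c k / 4^(j+k) * (y powr ((2*a-1) + 2 * real (j+k)) * exp (- (y^2) / 4)))"
    if y: "y > 0" for y
  proof -
    have "(phi d N n y / y)^2 * weight d y = ((phi d N n y)^2 * weight d y) / y^2"
      by (simp add: power_divide)
    also have "\<dots> = N^2 * (y powr (2*a+1) / y^2) * exp (- (y^2) / 4) * (\<Sum>k\<le>n. c k * (y^2/4)^k)^2"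
      unfolding base[OF y] by simp
    also have "y powr (2*a+1) / y^2 = y powr (2*a-1)"
    proof -
      have "y powr (2*a-1) * y powr 2 = y powr (2*a-1 + 2)" by (simp only: powr_add)
      also have "2*a-1+2 = 2*a+1" by simp
      finally have "y powr (2*a+1) = y powr (2*a-1) * y powr 2" by simp
      thus ?thesis using y by (simp add: powr_realpow)
    qed
    finally show ?thesis using expand[OF y] by simp
  qed
  have H1: "Hnorm_sq d (phi d N n) = ennreal (\<Sum>j\<le>n. \<Sum>k\<le>n. N^2 * c j * c k / 4^(j+k) * (2 powr ((2*a+1) + 2 * real (j+k)) * Gamma (((2*a+1) + 2 * real (j+k) + 1)/2)))"
    by (rule Hnorm_from[OF _ P1]) (unfold c_def, rule integral_sum2, use a in simp)
  have H0: "Hnorm_sq d (\<lambda>y. phi d N n y / y) = ennreal (\<Sum>j\<le>n. \<Sum>k\<le>n. N^2 * c j * c k / 4^(j+k) * (2 powr ((2*a-1) + 2 * real (j+k)) * Gamma (((2*a-1) + 2 * real (j+k) + 1)/2)))"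
    by (rule Hnorm_from[OF _ P0]) (unfold c_def, rule integral_sum2, use a in simp)
  have p4: "2 powr (e + 2 * real m) / 4^m = 2 powr e" for e :: real and m :: nat
  proof -
    have "(2::real) powr (2 * real m) = ((2::real) powr 2) powr real m" by (simp only: powr_powr)
    also have "(2::real) powr 2 = 4" by simp
    also have "(4::real) powr real m = 4^m" by (simp add: powr_realpow)
    finally have "2 powr (2 * real m) = (4::real)^m" .
    thus ?thesis by (simp add: powr_add)
  qed
  have V1: "(\<Sum>j\<le>n. \<Sum>k\<le>n. N^2 * c j * c k / 4^(j+k) * (2 powr ((2*a+1) + 2 * real (j+k)) * Gamma (((2*a+1) + 2 * real (j+k) + 1)/2)))
      = N^2 * 2 powr (2*a+1) * S1"
  proof -
    have "N^2 * c j * c k / 4^(j+k) * (2 powr ((2*a+1) + 2 * real (j+k)) * Gamma (((2*a+1) + 2 * real (j+k) + 1)/2))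
        = N^2 * 2 powr (2*a+1) * (c j * c k * Gamma (a + 1 + real j + real k))" for j k
    proof -
      have G: "Gamma (((2*a+1) + 2 * real (j+k) + 1)/2) = Gamma (a + 1 + real j + real k)" by (rule arg_cong[where f=Gamma]) simp
      have r: "x / q * (r * z) = x * (r / q) * z" for x q r z :: real by simp
      show ?thesis unfolding G r p4 by (simp only: mult_ac)
    qed
    thus ?thesis unfolding S1_def by (simp add: sum_distrib_left)
  qed
  have V0: "(\<Sum>j\<le>n. \<Sum>k\<le>n. N^2 * c j * c k / 4^(j+k) * (2 powr ((2*a-1) + 2 * real (j+k)) * Gamma (((2*a-1) + 2 * real (j+k) + 1)/2)))
      = N^2 * 2 powr (2*a-1) * S0"
  proof -
    have "N^2 * c j * c k / 4^(j+k) * (2 powr ((2*a-1) + 2 * real (j+k)) * Gamma (((2*a-1) + 2 * real (j+k) + 1)/2))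
        = N^2 * 2 powr (2*a-1) * (c j * c k * Gamma (a + real j + real k))" for j k
    proof -
      have G: "Gamma (((2*a-1) + 2 * real (j+k) + 1)/2) = Gamma (a + real j + real k)" by (rule arg_cong[where f=Gamma]) simp
      have r: "x / q * (r * z) = x * (r / q) * z" for x q r z :: real by simp
      show ?thesis unfolding G r p4 by (simp only: mult_ac)
    qed
    thus ?thesis unfolding S0_def by (simp add: sum_distrib_left)
  qed
  have one: "N^2 * 2 powr (2*a+1) * S1 = 1"
    using assms(3) H1 V1 by simp
  have "(2::real) powr (2*a-1) * 2 powr 2 = 2 powr (2*a-1 + 2)" by (simp only: powr_add)
  also have "2*a-1+2 = 2*a+1" by simp
  finally have "2 powr (2*a+1) = 4 * 2 powr (2*a-1)" by simp
  hence val: "N^2 * 2 powr (2*a-1) * S0 = 1 / (4*a)"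
    using one S a by (simp add: field_simps)
  have "1 / (4*a) \<le> 1" using a by simp
  also have "1 \<le> (4 * real n / w + 1)^2"
  proof -
    have "4 * real n / w \<ge> 0" using w1 by simp
    hence "1 \<le> 4 * real n / w + 1" by simp
    hence "1 * 1 \<le> (4 * real n / w + 1) * (4 * real n / w + 1)" by (intro mult_mono) auto
    thus ?thesis by (simp add: power2_eq_square)
  qed
  finally have le: "1/(4*a) \<le> (4 * real n / w + 1)^2" .
  show ?thesis unfolding H0 V0 val using le by (simp add: w_def ennreal_leI)
qed


end
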